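(* Let $X$ be a set; give $2^X$ the product topology and $X$ the discrete topology. Then: (i) $\tau_{pp}$ is the smallest topology on $I(X)$ for which $\mathrm{dom}:I(X)\to 2^X$, $\mathrm{im}:I(X)\to 2^X$ and, for every $x\in X$, $\mathrm{ev}_x:D_x\to X$ (with $D_x$ carrying the subspace topology) are continuous; (ii) $\mathrm{dom}$ and $\mathrm{im}$ are open maps from $(I(X),\tau_{pp})$ to $2^X$; (iii) for any topological space $Y$ and any map $\varphi:Y\to(I(X),\tau_{pp})$, $\varphi$ is continuous if and only if $\mathrm{dom}\circ\varphi$ and $\mathrm{im}\circ\varphi$ are continuous and, for every $x\in X$, $\mathrm{ev}_x\circ\varphi$ is continuous on $\varphi^{-1}(D_x)$; (iv) the set of idempotents $\{1_A: A\subseteq X\}$ is $\tau_{pp}$-compact.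
   Context: $I(X)$ is the set of all bijections $f:A\to B$ with $A,B\subseteq X$ (including the empty map), $\mathrm{dom}(f)=A$, $\mathrm{im}(f)=B$. The maps $\mathrm{dom},\mathrm{im}:I(X)\to 2^X$ send $f$ to $\mathrm{dom}(f)$ and $\mathrm{im}(f)$. $D_x=\{f\in I(X): x\in\mathrm{dom}(f)\}$ and $\mathrm{ev}_x:D_x\to X$, $f\mapsto f(x)$. $1_A$ is the identity on $A$. For $x,y\in X$: $v(x,y)=\{f: x\in\mathrm{dom}(f), f(x)=y\}$, $w_1(x)=\{f: x\notin\mathrm{dom}(f)\}$, $w_2(y)=\{f: y\notin\mathrm{im}(f)\}$; $\tau_{pp}$ is the topology generated by the subbasis of all these sets. *)

theory Defs
  imports "HOL-Analysis.Analysis"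
begin

text \<open>Partial bijections of X are modelled as partial maps ('a \<rightharpoonup> 'a) that are injective
on their domain, with domain and image contained in X. dom and im are Map.dom and Map.ran.\<close>

definition pbij :: "'a set \<Rightarrow> ('a \<rightharpoonup> 'a) set" where
  "pbij X = {f. dom f \<subseteq> X \<and> ran f \<subseteq> X \<and> inj_on f (dom f)}"

text \<open>The power set 2^X with the product topology of discrete {0,1}, transported along the
bijection A \<mapsto> characteristic function of A (restricted to X).\<close>

definition powset_topology :: "'a set \<Rightarrow> 'a set topology" where
  "powset_topology X =
     pullback_topology (Pow X) (\<lambda>A. restrict (\<lambda>x. x \<in> A) X)
       (product_topology (\<lambda>_. discrete_topology (UNIV :: bool set)) X)"

definition Dset :: "'a set \<Rightarrow> 'a \<Rightarrow> ('a \<rightharpoonup> 'a) set" where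
  "Dset X x = {f \<in> pbij X. x \<in> dom f}"

definition ev :: "'a \<Rightarrow> ('a \<rightharpoonup> 'a) \<Rightarrow> 'a" where
  "ev x f = the (f x)"

definition vset :: "'a set \<Rightarrow> 'a \<Rightarrow> 'a \<Rightarrow> ('a \<rightharpoonup> 'a) set" where
  "vset X x y = {f \<in> pbij X. x \<in> dom f \<and> f x = Some y}"

definition w1set :: "'a set \<Rightarrow> 'a \<Rightarrow> ('a \<rightharpoonup> 'a) set" where
  "w1set X x = {f \<in> pbij X. x \<notin> dom f}"

definition w2set :: "'a set \<Rightarrow> 'a \<Rightarrow> ('a \<rightharpoonup> 'a) set" where
  "w2set X y = {f \<in> pbij X. y \<notin> ran f}"

text \<open>tau_pp: topology on pbij X generated by the subbasis (the whole space is included so that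
the empty intersection, i.e. pbij X itself, is open also when X is empty).\<close>

definition tau_pp :: "'a set \<Rightarrow> ('a \<rightharpoonup> 'a) topology" where
  "tau_pp X = topology_generated_by
     (insert (pbij X)
       ({vset X x y | x y. x \<in> X \<and> y \<in> X} \<union> {w1set X x | x. x \<in> X} \<union> {w2set X y | y. y \<in> X}))"

definition idmap :: "'a set \<Rightarrow> ('a \<rightharpoonup> 'a)" where
  "idmap A = (\<lambda>x. if x \<in> A then Some x else None)"

end

theory Submission
  imports Defs
begin


lemma continuous_map_discrete_iff:
  "continuous_map T (discrete_topology D) f \<longleftrightarrow>
     f ` topspace T \<subseteq> D \<and> (\<forall>y\<in>D. openin T {t \<in> topspace T. f t = y})"
proof
  assume c: "continuous_map T (discrete_topology D) f"
  then have "f ` topspace T \<subseteq> D" by (auto simp: continuous_map)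
  moreover have "openin T {t \<in> topspace T. f t = y}" if "y \<in> D" for y
  proof -
    have "openin T {t \<in> topspace T. f t \<in> {y}}"
      using c that by (auto simp: continuous_map)
    then show ?thesis by simp
  qed
  ultimately show "f ` topspace T \<subseteq> D \<and> (\<forall>y\<in>D. openin T {t \<in> topspace T. f t = y})" by blast
next
  assume a: "f ` topspace T \<subseteq> D \<and> (\<forall>y\<in>D. openin T {t \<in> topspace T. f t = y})"
  show "continuous_map T (discrete_topology D) f"
    unfolding continuous_map
  proof (intro conjI allI impI)
    show "f ` topspace T \<subseteq> topspace (discrete_topology D)" using a by simp
    fix U assume "openin (discrete_topology D) U"
    then have U: "U \<subseteq> D" by simp
    have "{x \<in> topspace T. f x \<in> U} = (\<Union>y\<in>U. {t \<in> topspace T. f t = y})" by auto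
    moreover have "openin T (\<Union>y\<in>U. {t \<in> topspace T. f t = y})"
      using a U by (intro openin_Union) auto
    ultimately show "openin T {x \<in> topspace T. f x \<in> U}" by simp
  qed
qed

lemma topspace_powset: "topspace (powset_topology X) = Pow X"
  unfolding powset_topology_def topspace_pullback_topology by auto

lemma cyl_open:
  assumes "finite K" "K \<subseteq> X"
  shows "openin (powset_topology X) {A \<in> Pow X. A \<inter> K = C \<inter> K}"
proof -
  define S where "S = (\<lambda>i. if i \<in> K then {i \<in> C} else (UNIV::bool set))"
  have o: "openin (product_topology (\<lambda>_. discrete_topology (UNIV :: bool set)) X) (PiE X S)"
    unfolding openin_PiE_gen
  proof (rule disjI2, intro conjI)
    have "{i \<in> X. S i \<noteq> topspace (discrete_topology UNIV)} \<subseteq> K" by (auto simp: S_def)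
    then show "finite {i \<in> X. S i \<noteq> topspace (discrete_topology UNIV)}"
      using assms(1) finite_subset by blast
  qed auto
  have "{A \<in> Pow X. A \<inter> K = C \<inter> K} = (\<lambda>A. restrict (\<lambda>x. x \<in> A) X) -` PiE X S \<inter> Pow X"
    using assms(2) apply (auto simp: S_def PiE_iff)
    subgoal for A z by (drule bspec[of _ _ z]) auto
    subgoal for A z by (drule bspec[of _ _ z]) auto
    done
  with o show ?thesis unfolding powset_topology_def openin_pullback_topology by blast
qed

lemma continuous_map_powset:
  "continuous_map T (powset_topology X) h \<longleftrightarrow>
     h ` topspace T \<subseteq> Pow X \<and> (\<forall>x\<in>X. openin T {t\<in>topspace T. x \<in> h t}) \<and>
     (\<forall>x\<in>X. openin T {t\<in>topspace T. x \<notin> h t})"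
proof
  assume c: "continuous_map T (powset_topology X) h"
  then have im: "h ` topspace T \<subseteq> Pow X" by (auto simp: continuous_map topspace_powset)
  have A: "openin T {t\<in>topspace T. x \<in> h t}" if "x \<in> X" for x
  proof -
    have "openin (powset_topology X) {A \<in> Pow X. A \<inter> {x} = {x} \<inter> {x}}"
      using that by (intro cyl_open) auto
    then have "openin T {t\<in>topspace T. h t \<in> {A \<in> Pow X. A \<inter> {x} = {x} \<inter> {x}}}"
      using c by (auto simp: continuous_map)
    moreover have "{t\<in>topspace T. h t \<in> {A \<in> Pow X. A \<inter> {x} = {x} \<inter> {x}}} = {t\<in>topspace T. x \<in> h t}"
      using im by auto
    ultimately show ?thesis by simp
  qed
  have B: "openin T {t\<in>topspace T. x \<notin> h t}" if "x \<in> X" for x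
  proof -
    have "openin (powset_topology X) {A \<in> Pow X. A \<inter> {x} = {} \<inter> {x}}"
      using that by (intro cyl_open) auto
    then have "openin T {t\<in>topspace T. h t \<in> {A \<in> Pow X. A \<inter> {x} = {} \<inter> {x}}}"
      using c by (auto simp: continuous_map)
    moreover have "{t\<in>topspace T. h t \<in> {A \<in> Pow X. A \<inter> {x} = {} \<inter> {x}}} = {t\<in>topspace T. x \<notin> h t}"
      using im by auto
    ultimately show ?thesis by simp
  qed
  show "h ` topspace T \<subseteq> Pow X \<and> (\<forall>x\<in>X. openin T {t\<in>topspace T. x \<in> h t}) \<and>
     (\<forall>x\<in>X. openin T {t\<in>topspace T. x \<notin> h t})" using im A B by blast
next
  assume a: "h ` topspace T \<subseteq> Pow X \<and> (\<forall>x\<in>X. openin T {t\<in>topspace T. x \<in> h t}) \<and>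
     (\<forall>x\<in>X. openin T {t\<in>topspace T. x \<notin> h t})"
  have "continuous_map T (product_topology (\<lambda>_. discrete_topology (UNIV :: bool set)) X)
          ((\<lambda>A. restrict (\<lambda>x. x \<in> A) X) \<circ> h)"
    unfolding continuous_map_componentwise
  proof (intro conjI ballI)
    show "((\<lambda>A. restrict (\<lambda>x. x \<in> A) X) \<circ> h) ` topspace T \<subseteq> extensional X" by auto
    fix k assume k: "k \<in> X"
    show "continuous_map T (discrete_topology UNIV) (\<lambda>x. ((\<lambda>A. restrict (\<lambda>x. x \<in> A) X) \<circ> h) x k)"
      unfolding continuous_map_discrete_iff
    proof (intro conjI ballI)
      fix y :: bool
      show "openin T {t \<in> topspace T. ((\<lambda>A. restrict (\<lambda>x. x \<in> A) X) \<circ> h) t k = y}"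
      proof (cases y)
        case True
        then show ?thesis using a k by simp
      next
        case False
        then show ?thesis using a k by simp
      qed
    qed auto
  qed
  then show "continuous_map T (powset_topology X) h"
    unfolding powset_topology_def using a by (intro continuous_map_pullback') auto
qed



lemma topspace_tau: "topspace (tau_pp X) = pbij X"
  unfolding tau_pp_def topology_generated_by_topspace
  by (auto simp: vset_def w1set_def w2set_def)

lemma open_tau_basis:
  "s \<in> insert (pbij X)
       ({vset X x y | x y. x \<in> X \<and> y \<in> X} \<union> {w1set X x | x. x \<in> X} \<union> {w2set X y | y. y \<in> X})
   \<Longrightarrow> openin (tau_pp X) s"
  unfolding tau_pp_def by (rule topology_generated_by_Basis)

lemma open_vset: "x \<in> X \<Longrightarrow> y \<in> X \<Longrightarrow> openin (tau_pp X) (vset X x y)"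
  by (rule open_tau_basis) blast
lemma open_w1set: "x \<in> X \<Longrightarrow> openin (tau_pp X) (w1set X x)"
  by (rule open_tau_basis) blast
lemma open_w2set: "x \<in> X \<Longrightarrow> openin (tau_pp X) (w2set X x)"
  by (rule open_tau_basis) blast

lemma pbij_ranD: "f \<in> pbij X \<Longrightarrow> f x = Some y \<Longrightarrow> y \<in> X"
  unfolding pbij_def by (auto simp: ran_def)
lemma pbij_domD: "f \<in> pbij X \<Longrightarrow> f x = Some y \<Longrightarrow> x \<in> X"
  unfolding pbij_def by (auto simp: dom_def)

lemma Dset_Union: "Dset X x = (\<Union>y\<in>X. vset X x y)"
  by (auto simp: Dset_def vset_def dest: pbij_ranD)

lemma open_Dset: "x \<in> X \<Longrightarrow> openin (tau_pp X) (Dset X x)"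
  unfolding Dset_Union by (intro openin_Union) (auto intro: open_vset)

lemma ran_Union: "{f \<in> pbij X. x \<in> ran f} = (\<Union>z\<in>X. vset X z x)"
  by (auto simp: vset_def ran_def dest: pbij_domD)

lemma part_i_a:
  "continuous_map (tau_pp X) (powset_topology X) dom \<and>
   continuous_map (tau_pp X) (powset_topology X) ran \<and>
   (\<forall>x\<in>X. continuous_map (subtopology (tau_pp X) (Dset X x)) (discrete_topology X) (ev x))"
proof (intro conjI ballI)
  show "continuous_map (tau_pp X) (powset_topology X) dom"
    unfolding continuous_map_powset topspace_tau
  proof (intro conjI ballI)
    show "dom ` pbij X \<subseteq> Pow X" by (auto simp: pbij_def)
    fix x assume x: "x \<in> X"
    have "{t \<in> pbij X. x \<in> dom t} = Dset X x" by (auto simp: Dset_def)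
    then show "openin (tau_pp X) {t \<in> pbij X. x \<in> dom t}" using open_Dset[OF x] by simp
    have "{t \<in> pbij X. x \<notin> dom t} = w1set X x" by (auto simp: w1set_def)
    then show "openin (tau_pp X) {t \<in> pbij X. x \<notin> dom t}" using open_w1set[OF x] by simp
  qed
  show "continuous_map (tau_pp X) (powset_topology X) ran"
    unfolding continuous_map_powset topspace_tau
  proof (intro conjI ballI)
    show "ran ` pbij X \<subseteq> Pow X" by (auto simp: pbij_def)
    fix x assume x: "x \<in> X"
    show "openin (tau_pp X) {t \<in> pbij X. x \<in> ran t}" unfolding ran_Union
      by (intro openin_Union) (auto intro: open_vset x)
    have "{t \<in> pbij X. x \<notin> ran t} = w2set X x" by (auto simp: w2set_def)
    then show "openin (tau_pp X) {t \<in> pbij X. x \<notin> ran t}" using open_w2set[OF x] by simp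
  qed
  fix x assume x: "x \<in> X"
  have ts: "topspace (subtopology (tau_pp X) (Dset X x)) = Dset X x"
    by (auto simp: topspace_tau Dset_def)
  show "continuous_map (subtopology (tau_pp X) (Dset X x)) (discrete_topology X) (ev x)"
    unfolding continuous_map_discrete_iff ts
  proof (intro conjI ballI)
    show "ev x ` Dset X x \<subseteq> X" by (auto simp: Dset_def ev_def dest: pbij_ranD)
    fix y assume y: "y \<in> X"
    have "{t \<in> Dset X x. ev x t = y} = Dset X x \<inter> vset X x y"
      by (auto simp: Dset_def vset_def ev_def)
    then show "openin (subtopology (tau_pp X) (Dset X x)) {t \<in> Dset X x. ev x t = y}"
      using open_vset[OF x y] by (simp add: openin_subtopology_Int2)
  qed
qed

lemma continuous_map_generated:
  assumes im: "\<phi> ` topspace Y \<subseteq> \<Union>S"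
    and op: "\<And>s. s \<in> S \<Longrightarrow> openin Y {y \<in> topspace Y. \<phi> y \<in> s}"
  shows "continuous_map Y (topology_generated_by S) \<phi>"
  unfolding continuous_map
proof (intro conjI allI impI)
  show "\<phi> ` topspace Y \<subseteq> topspace (topology_generated_by S)" using im by simp
  fix U assume "openin (topology_generated_by S) U"
  then have "generate_topology_on S U" by (rule openin_topology_generated_by)
  then show "openin Y {x \<in> topspace Y. \<phi> x \<in> U}"
  proof induction
    case Empty then show ?case by simp
  next
    case (Int a b)
    have "{x \<in> topspace Y. \<phi> x \<in> a \<inter> b} = {x \<in> topspace Y. \<phi> x \<in> a} \<inter> {x \<in> topspace Y. \<phi> x \<in> b}" by auto
    then show ?case using Int by auto
  next
    case (UN K)
    have "{x \<in> topspace Y. \<phi> x \<in> \<Union>K} = (\<Union>k\<in>K. {x \<in> topspace Y. \<phi> x \<in> k})" by auto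
    then show ?case using UN by (auto intro: openin_Union)
  next
    case (Basis s) then show ?case using op by simp
  qed
qed

lemma part_iii_rev:
  assumes im: "\<phi> ` topspace Y \<subseteq> pbij X"
    and cd: "continuous_map Y (powset_topology X) (dom \<circ> \<phi>)"
    and cr: "continuous_map Y (powset_topology X) (ran \<circ> \<phi>)"
    and ce: "\<forall>x\<in>X. continuous_map (subtopology Y {y \<in> topspace Y. \<phi> y \<in> Dset X x})
                     (discrete_topology X) (ev x \<circ> \<phi>)"
  shows "continuous_map Y (tau_pp X) \<phi>"
  unfolding tau_pp_def
proof (rule continuous_map_generated)
  show "\<phi> ` topspace Y \<subseteq> \<Union> (insert (pbij X)
       ({vset X x y | x y. x \<in> X \<and> y \<in> X} \<union> {w1set X x | x. x \<in> X} \<union> {w2set X y | y. y \<in> X}))"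
    using im by blast
  have D: "openin Y {t \<in> topspace Y. x \<in> dom (\<phi> t)}"
     and W1: "openin Y {t \<in> topspace Y. x \<notin> dom (\<phi> t)}"
     and W2: "openin Y {t \<in> topspace Y. x \<notin> ran (\<phi> t)}" if "x \<in> X" for x
    using cd cr that unfolding continuous_map_powset by auto
  fix s assume "s \<in> insert (pbij X)
       ({vset X x y | x y. x \<in> X \<and> y \<in> X} \<union> {w1set X x | x. x \<in> X} \<union> {w2set X y | y. y \<in> X})"
  then consider "s = pbij X" | x y where "x \<in> X" "y \<in> X" "s = vset X x y"
    | x where "x \<in> X" "s = w1set X x" | x where "x \<in> X" "s = w2set X x" by blast
  then show "openin Y {y \<in> topspace Y. \<phi> y \<in> s}"
  proof cases
    case 1
    then have "{y \<in> topspace Y. \<phi> y \<in> s} = topspace Y" using im by auto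
    then show ?thesis by simp
  next
    case (2 x y)
    define P where "P = {y \<in> topspace Y. \<phi> y \<in> Dset X x}"
    have P: "P = {t \<in> topspace Y. x \<in> dom (\<phi> t)}" using im by (auto simp: P_def Dset_def)
    have tsP: "topspace (subtopology Y P) = P" by (auto simp: P_def)
    have c: "continuous_map (subtopology Y P) (discrete_topology X) (ev x \<circ> \<phi>)"
      using ce 2 by (simp add: P_def)
    have "openin (subtopology Y P) {t \<in> topspace (subtopology Y P). (ev x \<circ> \<phi>) t = y}"
      using c 2 unfolding continuous_map_discrete_iff by blast
    then have "openin (subtopology Y P) {t \<in> P. (ev x \<circ> \<phi>) t = y}" by (simp only: tsP)
    moreover have "{t \<in> P. (ev x \<circ> \<phi>) t = y} = {y \<in> topspace Y. \<phi> y \<in> s}"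
      using im 2 by (auto simp: P_def Dset_def vset_def ev_def)
    ultimately show ?thesis using D[OF 2(1)] P openin_trans_full by metis
  next
    case (3 x)
    then have "{y \<in> topspace Y. \<phi> y \<in> s} = {t \<in> topspace Y. x \<notin> dom (\<phi> t)}"
      using im by (auto simp: w1set_def)
    then show ?thesis using W1 3 by simp
  next
    case (4 x)
    then have "{y \<in> topspace Y. \<phi> y \<in> s} = {t \<in> topspace Y. x \<notin> ran (\<phi> t)}"
      using im by (auto simp: w2set_def)
    then show ?thesis using W2 4 by simp
  qed
qed

lemma part_iii:
  assumes im: "\<phi> ` topspace Y \<subseteq> pbij X"
  shows "continuous_map Y (tau_pp X) \<phi> \<longleftrightarrow>
          continuous_map Y (powset_topology X) (dom \<circ> \<phi>) \<and>
          continuous_map Y (powset_topology X) (ran \<circ> \<phi>) \<and>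
          (\<forall>x\<in>X. continuous_map (subtopology Y {y \<in> topspace Y. \<phi> y \<in> Dset X x})
                     (discrete_topology X) (ev x \<circ> \<phi>))"
proof
  assume c: "continuous_map Y (tau_pp X) \<phi>"
  have "\<forall>x\<in>X. continuous_map (subtopology Y {y \<in> topspace Y. \<phi> y \<in> Dset X x})
                     (discrete_topology X) (ev x \<circ> \<phi>)"
  proof
    fix x assume x: "x \<in> X"
    have c1: "continuous_map (subtopology Y {y \<in> topspace Y. \<phi> y \<in> Dset X x})
            (subtopology (tau_pp X) (Dset X x)) \<phi>"
      by (rule continuous_map_into_subtopology[OF continuous_map_from_subtopology[OF c]]) auto
    have e: "continuous_map (subtopology (tau_pp X) (Dset X x)) (discrete_topology X) (ev x)"
      using part_i_a[THEN conjunct2, THEN conjunct2] x by (rule bspec)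
    show "continuous_map (subtopology Y {y \<in> topspace Y. \<phi> y \<in> Dset X x})
                     (discrete_topology X) (ev x \<circ> \<phi>)"
      by (rule continuous_map_compose[OF c1 e])
  qed
  then show "continuous_map Y (powset_topology X) (dom \<circ> \<phi>) \<and>
          continuous_map Y (powset_topology X) (ran \<circ> \<phi>) \<and>
          (\<forall>x\<in>X. continuous_map (subtopology Y {y \<in> topspace Y. \<phi> y \<in> Dset X x})
                     (discrete_topology X) (ev x \<circ> \<phi>))"
    using continuous_map_compose[OF c part_i_a[THEN conjunct1]]
      continuous_map_compose[OF c part_i_a[THEN conjunct2, THEN conjunct1]] by blast
next
  assume "continuous_map Y (powset_topology X) (dom \<circ> \<phi>) \<and>
          continuous_map Y (powset_topology X) (ran \<circ> \<phi>) \<and>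
          (\<forall>x\<in>X. continuous_map (subtopology Y {y \<in> topspace Y. \<phi> y \<in> Dset X x})
                     (discrete_topology X) (ev x \<circ> \<phi>))"
  then show "continuous_map Y (tau_pp X) \<phi>" using part_iii_rev[OF im] by blast
qed

lemma part_i_b:
  assumes "topspace T = pbij X"
    "continuous_map T (powset_topology X) dom"
    "continuous_map T (powset_topology X) ran"
    "\<forall>x\<in>X. continuous_map (subtopology T (Dset X x)) (discrete_topology X) (ev x)"
    "openin (tau_pp X) U"
  shows "openin T U"
proof -
  have "continuous_map T (tau_pp X) id"
  proof (rule part_iii_rev)
    show "id ` topspace T \<subseteq> pbij X" using assms(1) by simp
    show "continuous_map T (powset_topology X) (dom \<circ> id)" using assms(2) by simp
    show "continuous_map T (powset_topology X) (ran \<circ> id)" using assms(3) by simp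
    have "{y \<in> topspace T. id y \<in> Dset X x} = Dset X x" for x
      using assms(1) by (auto simp: Dset_def)
    then show "\<forall>x\<in>X. continuous_map (subtopology T {y \<in> topspace T. id y \<in> Dset X x})
                     (discrete_topology X) (ev x \<circ> id)" using assms(4) by simp
  qed
  then have "openin T {x \<in> topspace T. id x \<in> U}" using assms(5) by (auto simp: continuous_map)
  moreover have "U \<subseteq> pbij X" using openin_subset[OF assms(5)] by (simp add: topspace_tau)
  moreover have "{x \<in> topspace T. id x \<in> U} = U" using calculation(2) assms(1) by auto
  ultimately show ?thesis by simp
qed



lemma compact_powset: "compact_space (powset_topology X)"
proof -
  let ?P = "product_topology (\<lambda>_. discrete_topology (UNIV :: bool set)) X"
  have cP: "compactin ?P (topspace ?P)"
  proof -
    have "compact_space (discrete_topology (UNIV::bool set))"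
      by (simp add: compact_space_discrete_topology)
    then have "compact_space ?P"
      using compact_space_product_topology[of "\<lambda>_. discrete_topology (UNIV :: bool set)" X] by blast
    then show ?thesis by (simp add: compact_space_def)
  qed
  define g where "g = (\<lambda>h. {x \<in> X. h x})"
  have cg: "continuous_map ?P (powset_topology X) g"
    unfolding continuous_map_powset
  proof (intro conjI ballI)
    show "g ` topspace ?P \<subseteq> Pow X" by (auto simp: g_def)
    fix x assume x: "x \<in> X"
    have pr: "continuous_map ?P (discrete_topology UNIV) (\<lambda>h. h x)"
      using continuous_map_product_projection[OF x, where X="\<lambda>_. discrete_topology (UNIV::bool set)"] by simp
    have "openin ?P {t \<in> topspace ?P. t x = True}"
      using pr unfolding continuous_map_discrete_iff by blast
    moreover have "{t \<in> topspace ?P. x \<in> g t} = {t \<in> topspace ?P. t x = True}"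
      using x by (auto simp: g_def)
    ultimately show "openin ?P {t \<in> topspace ?P. x \<in> g t}" by simp
    have "openin ?P {t \<in> topspace ?P. t x = False}"
      using pr unfolding continuous_map_discrete_iff by blast
    moreover have "{t \<in> topspace ?P. x \<notin> g t} = {t \<in> topspace ?P. t x = False}"
      using x by (auto simp: g_def)
    ultimately show "openin ?P {t \<in> topspace ?P. x \<notin> g t}" by simp
  qed
  have "g ` topspace ?P = Pow X"
  proof
    show "g ` topspace ?P \<subseteq> Pow X" by (auto simp: g_def)
    show "Pow X \<subseteq> g ` topspace ?P"
    proof
      fix A assume A: "A \<in> Pow X"
      have "restrict (\<lambda>x. x \<in> A) X \<in> topspace ?P" by auto
      moreover have "g (restrict (\<lambda>x. x \<in> A) X) = A" using A by (auto simp: g_def)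
      ultimately show "A \<in> g ` topspace ?P" by (metis image_eqI)
    qed
  qed
  then show ?thesis using image_compactin[OF cP cg]
    by (simp add: compact_space_def topspace_powset)
qed

lemma dom_idmap[simp]: "dom (idmap A) = A"
  by (auto simp: idmap_def dom_def)
lemma ran_idmap[simp]: "ran (idmap A) = A"
  by (auto simp: idmap_def ran_def)

lemma part_iv: "compactin (tau_pp X) {idmap A | A. A \<subseteq> X}"
proof -
  have im: "idmap ` topspace (powset_topology X) \<subseteq> pbij X"
    by (auto simp: topspace_powset pbij_def idmap_def inj_on_def ran_def split: if_splits)
  have "continuous_map (powset_topology X) (tau_pp X) idmap"
  proof (rule part_iii_rev[OF im])
    show "continuous_map (powset_topology X) (powset_topology X) (dom \<circ> idmap)"
      by (rule continuous_map_eq[OF continuous_map_id]) simp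
    show "continuous_map (powset_topology X) (powset_topology X) (ran \<circ> idmap)"
      by (rule continuous_map_eq[OF continuous_map_id]) simp
    show "\<forall>x\<in>X. continuous_map (subtopology (powset_topology X) {y \<in> topspace (powset_topology X). idmap y \<in> Dset X x})
                     (discrete_topology X) (ev x \<circ> idmap)"
    proof
      fix x assume x: "x \<in> X"
      show "continuous_map (subtopology (powset_topology X) {y \<in> topspace (powset_topology X). idmap y \<in> Dset X x})
                     (discrete_topology X) (ev x \<circ> idmap)"
      proof (rule continuous_map_eq[of _ _ "\<lambda>_. x"])
        show "continuous_map (subtopology (powset_topology X) {y \<in> topspace (powset_topology X). idmap y \<in> Dset X x})
                     (discrete_topology X) (\<lambda>_. x)" using x by simp
        fix A assume "A \<in> topspace (subtopology (powset_topology X) {y \<in> topspace (powset_topology X). idmap y \<in> Dset X x})"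
        then have "x \<in> A" by (auto simp: Dset_def)
        then show "x = (ev x \<circ> idmap) A" by (simp add: ev_def idmap_def)
      qed
    qed
  qed
  moreover have "compactin (powset_topology X) (topspace (powset_topology X))"
    using compact_powset by (simp add: compact_space_def)
  ultimately have "compactin (tau_pp X) (idmap ` topspace (powset_topology X))"
    by (rule image_compactin[rotated])
  moreover have "idmap ` topspace (powset_topology X) = {idmap A | A. A \<subseteq> X}"
    by (auto simp: topspace_powset)
  ultimately show ?thesis by simp
qed



definition sat :: "'a set \<Rightarrow> ('a \<times> 'a) set \<Rightarrow> 'a set \<Rightarrow> 'a set \<Rightarrow> ('a \<rightharpoonup> 'a) set" where
  "sat X V F1 F2 = {g \<in> pbij X. (\<forall>(x,y)\<in>V. g x = Some y) \<and> (\<forall>x\<in>F1. x \<notin> dom g) \<and> (\<forall>y\<in>F2. y \<notin> ran g)}"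

definition okc :: "'a set \<Rightarrow> ('a \<times> 'a) set \<Rightarrow> 'a set \<Rightarrow> 'a set \<Rightarrow> bool" where
  "okc X V F1 F2 \<longleftrightarrow> finite V \<and> finite F1 \<and> finite F2 \<and> V \<subseteq> X \<times> X \<and> F1 \<subseteq> X \<and> F2 \<subseteq> X"

definition basic :: "'a set \<Rightarrow> ('a \<rightharpoonup> 'a) set \<Rightarrow> bool" where
  "basic X U \<longleftrightarrow> (\<forall>f\<in>U. \<exists>V F1 F2. okc X V F1 F2 \<and> f \<in> sat X V F1 F2 \<and> sat X V F1 F2 \<subseteq> U)"

lemma okc_Un: "okc X V F1 F2 \<Longrightarrow> okc X V' F1' F2' \<Longrightarrow> okc X (V \<union> V') (F1 \<union> F1') (F2 \<union> F2')"
  by (simp add: okc_def)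

lemma sat_Int: "sat X V F1 F2 \<inter> sat X V' F1' F2' = sat X (V \<union> V') (F1 \<union> F1') (F2 \<union> F2')"
  unfolding sat_def by auto

lemma basicI: "(\<And>f. f \<in> U \<Longrightarrow> \<exists>V F1 F2. okc X V F1 F2 \<and> f \<in> sat X V F1 F2 \<and> sat X V F1 F2 \<subseteq> U) \<Longrightarrow> basic X U"
  unfolding basic_def by blast

lemma basicE:
  assumes "basic X U" "f \<in> U"
  obtains V F1 F2 where "okc X V F1 F2" "f \<in> sat X V F1 F2" "sat X V F1 F2 \<subseteq> U"
  using assms unfolding basic_def by blast

lemma basic_Int: "basic X a \<Longrightarrow> basic X b \<Longrightarrow> basic X (a \<inter> b)"
proof (rule basicI)
  fix f assume ba: "basic X a" and bb: "basic X b" and fab: "f \<in> a \<inter> b"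
  obtain V F1 F2 where o1: "okc X V F1 F2" and f1: "f \<in> sat X V F1 F2" and s1: "sat X V F1 F2 \<subseteq> a"
    using basicE[OF ba] fab by blast
  obtain V' F1' F2' where o2: "okc X V' F1' F2'" and f2: "f \<in> sat X V' F1' F2'" and s2: "sat X V' F1' F2' \<subseteq> b"
    using basicE[OF bb] fab by blast
  have e: "sat X (V \<union> V') (F1 \<union> F1') (F2 \<union> F2') = sat X V F1 F2 \<inter> sat X V' F1' F2'"
    by (rule sat_Int[symmetric])
  show "\<exists>V F1 F2. okc X V F1 F2 \<and> f \<in> sat X V F1 F2 \<and> sat X V F1 F2 \<subseteq> a \<inter> b"
  proof (intro exI conjI)
    show "okc X (V \<union> V') (F1 \<union> F1') (F2 \<union> F2')" by (rule okc_Un[OF o1 o2])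
    show "f \<in> sat X (V \<union> V') (F1 \<union> F1') (F2 \<union> F2')" unfolding e using f1 f2 by (rule IntI)
    show "sat X (V \<union> V') (F1 \<union> F1') (F2 \<union> F2') \<subseteq> a \<inter> b" unfolding e using s1 s2 by (rule Int_mono)
  qed
qed

lemma basic_Union: "(\<And>k. k \<in> K \<Longrightarrow> basic X k) \<Longrightarrow> basic X (\<Union>K)"
proof (rule basicI)
  fix f assume bk: "\<And>k. k \<in> K \<Longrightarrow> basic X k" and f: "f \<in> \<Union>K"
  then obtain k where k: "k \<in> K" "f \<in> k" by blast
  obtain V F1 F2 where o: "okc X V F1 F2" and f1: "f \<in> sat X V F1 F2" and s1: "sat X V F1 F2 \<subseteq> k"
    using basicE[OF bk[OF k(1)] k(2)] by blast
  have "sat X V F1 F2 \<subseteq> \<Union>K" using s1 k(1) by blast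
  then show "\<exists>V F1 F2. okc X V F1 F2 \<and> f \<in> sat X V F1 F2 \<and> sat X V F1 F2 \<subseteq> \<Union>K"
    using o f1 by blast
qed

lemma basic_sat:
  assumes "okc X V F1 F2" "sat X V F1 F2 = U" shows "basic X U"
proof (rule basicI)
  fix f assume "f \<in> U"
  then show "\<exists>V F1 F2. okc X V F1 F2 \<and> f \<in> sat X V F1 F2 \<and> sat X V F1 F2 \<subseteq> U"
    using assms by (intro exI[of _ V] exI[of _ F1] exI[of _ F2]) simp
qed

lemma basic_generated:
  assumes "openin (tau_pp X) U" shows "basic X U"
proof -
  have "generate_topology_on (insert (pbij X)
       ({vset X x y | x y. x \<in> X \<and> y \<in> X} \<union> {w1set X x | x. x \<in> X} \<union> {w2set X y | y. y \<in> X})) U"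
    using assms unfolding tau_pp_def by (rule openin_topology_generated_by)
  then show ?thesis
  proof induction
    case Empty then show ?case by (simp add: basic_def)
  next
    case (Int a b) then show ?case by (intro basic_Int)
  next
    case (UN K) then show ?case by (intro basic_Union)
  next
    case (Basis s)
    then consider "s = pbij X" | x y where "x \<in> X" "y \<in> X" "s = vset X x y"
      | x where "x \<in> X" "s = w1set X x" | x where "x \<in> X" "s = w2set X x" by blast
    then show ?case
    proof cases
      case 1
      show ?thesis by (rule basic_sat[of X "{}" "{}" "{}"]) (auto simp: okc_def sat_def 1)
    next
      case (2 x y)
      show ?thesis by (rule basic_sat[of X "{(x,y)}" "{}" "{}"]) (auto simp: okc_def sat_def vset_def 2)
    next
      case (3 x)
      show ?thesis by (rule basic_sat[of X "{}" "{x}" "{}"]) (auto simp: okc_def sat_def w1set_def 3)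
    next
      case (4 x)
      show ?thesis by (rule basic_sat[of X "{}" "{}" "{x}"]) (auto simp: okc_def sat_def w2set_def 4)
    qed
  qed
qed

lemma inj_avoid:
  assumes "infinite X" "finite S"
  shows "\<exists>h. inj_on h X \<and> h ` X \<subseteq> X - S"
  using assms(2)
proof induction
  case empty
  show ?case by (intro exI[of _ id]) auto
next
  case (insert s S)
  then obtain h where h: "inj_on h X" "h ` X \<subseteq> X - S" by blast
  have "infinite (X - S)" using assms(1) insert(1) by simp
  then have "\<exists>h'. bij_betw h' (X - S) (X - S - {s})" by (rule infinite_imp_bij_betw)
  then obtain h' where h': "bij_betw h' (X - S) (X - S - {s})" by blast
  have "inj_on (h' \<circ> h) X"
  proof (rule comp_inj_on[OF h(1)])
    have "inj_on h' (X - S)" using h' by (simp add: bij_betw_def)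
    then show "inj_on h' (h ` X)" using h(2) by (rule inj_on_subset)
  qed
  moreover have "(h' \<circ> h) ` X \<subseteq> X - insert s S"
  proof
    fix y assume "y \<in> (h' \<circ> h) ` X"
    then obtain x where x: "x \<in> X" "y = h' (h x)" by auto
    have "h x \<in> X - S" using h(2) x(1) by blast
    then have "h' (h x) \<in> X - S - {s}" using bij_betwE[OF h'] by blast
    then show "y \<in> X - insert s S" using x(2) by simp
  qed
  ultimately have "inj_on (h' \<circ> h) X \<and> (h' \<circ> h) ` X \<subseteq> X - insert s S" by (rule conjI)
  then show ?case by (rule exI[of _ "h' \<circ> h"])
qed

lemma key_dom:
  assumes f: "f \<in> sat X V F1 F2" and fin: "finite V" "finite F1" "finite F2"
    and sub: "V \<subseteq> X \<times> X" "F1 \<subseteq> X" "F2 \<subseteq> X"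
  shows "\<exists>N. openin (powset_topology X) N \<and> dom f \<in> N \<and> N \<subseteq> dom ` sat X V F1 F2"
proof (cases "finite X")
  case True
  have fp: "f \<in> pbij X" using f by (simp add: sat_def)
  have "openin (powset_topology X) {A \<in> Pow X. A \<inter> X = dom f \<inter> X}"
    using True by (intro cyl_open) auto
  moreover have "{A \<in> Pow X. A \<inter> X = dom f \<inter> X} = {dom f}"
  proof -
    have dX: "dom f \<subseteq> X" using fp by (simp add: pbij_def)
    show ?thesis using dX by (auto simp: Int_absorb2)
  qed
  ultimately show ?thesis using f by (intro exI[of _ "{dom f}"]) auto
next
  case False
  have fp: "f \<in> pbij X" using f by (simp add: sat_def)
  define K where "K = fst ` V \<union> F1"
  define S where "S = snd ` V \<union> F2"
  have K: "finite K" "K \<subseteq> X" using fin sub by (auto simp: K_def)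
  have "finite S" using fin by (auto simp: S_def)
  then obtain h where h: "inj_on h X" "h ` X \<subseteq> X - S" using inj_avoid False by blast
  define N where "N = {A \<in> Pow X. A \<inter> K = dom f \<inter> K}"
  have "openin (powset_topology X) N" unfolding N_def using K by (rule cyl_open)
  moreover have "dom f \<in> N" using fp by (auto simp: N_def pbij_def)
  moreover have "N \<subseteq> dom ` sat X V F1 F2"
  proof
    fix A assume A: "A \<in> N"
    have fV: "f x = Some y" if "(x,y) \<in> V" for x y using f that by (auto simp: sat_def)
    have fVdom: "fst ` V \<subseteq> dom f" using fV by force
    have eqK: "A \<inter> K = dom f \<inter> K" using A by (simp add: N_def)
    have fVA: "fst ` V \<subseteq> A"
    proof
      fix x assume "x \<in> fst ` V"
      then have "x \<in> dom f \<inter> K" using fVdom by (auto simp: K_def)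
      then have "x \<in> A \<inter> K" by (simp only: eqK)
      then show "x \<in> A" by simp
    qed
    have AX: "A \<subseteq> X" using A by (auto simp: N_def)
    define g where "g = (\<lambda>x. if x \<in> fst ` V then f x else if x \<in> A then Some (h x) else None)"
    have domg: "dom g = A" using fVA fVdom by (auto simp: g_def dom_def)
    have gfst: "y \<in> S" if a: "x \<in> fst ` V" "g x = Some y" for x y
    proof -
      obtain y' where xy: "(x,y') \<in> V" using a(1) by force
      then have "f x = Some y'" using fV by blast
      with a have "y = y'" by (simp add: g_def)
      then show ?thesis using xy by (force simp: S_def)
    qed
    have gnot: "x \<notin> fst ` V \<Longrightarrow> g x = Some y \<Longrightarrow> y = h x \<and> x \<in> A" for x y
      by (auto simp: g_def split: if_splits)
    have "g \<in> pbij X" unfolding pbij_def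
    proof (intro CollectI conjI)
      show "dom g \<subseteq> X" using domg AX by simp
      show "ran g \<subseteq> X"
      proof
        fix y assume "y \<in> ran g"
        then obtain x where gx: "g x = Some y" by (auto simp: ran_def)
        show "y \<in> X"
        proof (cases "x \<in> fst ` V")
          case True then show ?thesis using gx fp by (auto simp: g_def dest: pbij_ranD)
        next
          case False then show ?thesis using gnot[OF False gx] h AX by auto
        qed
      qed
      show "inj_on g (dom g)"
      proof (rule inj_onI)
        fix x x' assume "x \<in> dom g" "x' \<in> dom g" and eq: "g x = g x'"
        then obtain y where gx: "g x = Some y" and gx': "g x' = Some y" by auto
        show "x = x'"
        proof (cases "x \<in> fst ` V"; cases "x' \<in> fst ` V")
          assume a: "x \<in> fst ` V" "x' \<in> fst ` V"
          then have "f x = Some y" "f x' = Some y" using gx gx' by (auto simp: g_def)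
          then show ?thesis using fp by (auto simp: pbij_def inj_on_def dom_def)
        next
          assume a: "x \<in> fst ` V" "x' \<notin> fst ` V"
          then show ?thesis using gfst[OF a(1) gx] gnot[OF a(2) gx'] h AX by auto
        next
          assume a: "x \<notin> fst ` V" "x' \<in> fst ` V"
          then show ?thesis using gfst[OF a(2) gx'] gnot[OF a(1) gx] h AX by auto
        next
          assume a: "x \<notin> fst ` V" "x' \<notin> fst ` V"
          have "x \<in> A" "x' \<in> A" "h x = h x'" using gnot[OF a(1) gx] gnot[OF a(2) gx'] by auto
          then show ?thesis using h(1) AX by (metis inj_onD subsetD)
        qed
      qed
    qed
    moreover have "\<forall>(x,y)\<in>V. g x = Some y"
    proof (intro ballI, clarify)
      fix x y assume xy: "(x,y) \<in> V"
      then have "x \<in> fst ` V" by force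
      then show "g x = Some y" using fV[OF xy] by (simp add: g_def)
    qed
    moreover have "\<forall>x\<in>F1. x \<notin> dom g"
    proof
      fix x assume x: "x \<in> F1"
      have "x \<notin> dom f" using f x by (auto simp: sat_def)
      moreover have "x \<in> K" using x by (simp add: K_def)
      ultimately have "x \<notin> A \<inter> K" by (simp only: eqK) simp
      then show "x \<notin> dom g" using domg \<open>x \<in> K\<close> by simp
    qed
    moreover have "\<forall>y\<in>F2. y \<notin> ran g"
    proof (intro ballI notI)
      fix y assume y: "y \<in> F2" "y \<in> ran g"
      then obtain x where gx: "g x = Some y" by (auto simp: ran_def)
      show False
      proof (cases "x \<in> fst ` V")
        case True
        then have "f x = Some y" using gx by (simp add: g_def)
        then show False using f y(1) by (auto simp: sat_def ran_def)
      next
        case False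
        then show False using gnot[OF False gx] h AX y(1) by (auto simp: S_def)
      qed
    qed
    ultimately have "g \<in> sat X V F1 F2" by (simp add: sat_def)
    then show "A \<in> dom ` sat X V F1 F2" using domg by force
  qed
  ultimately show ?thesis by blast
qed

definition conv :: "('a \<rightharpoonup> 'a) \<Rightarrow> ('a \<rightharpoonup> 'a)" where
  "conv f = (\<lambda>y. if y \<in> ran f then Some (THE x. f x = Some y) else None)"

lemma conv_iff:
  assumes "f \<in> pbij X" shows "conv f y = Some x \<longleftrightarrow> f x = Some y"
proof -
  have uniq: "f x1 = Some y \<Longrightarrow> f x2 = Some y \<Longrightarrow> x1 = x2" for x1 x2
    using assms by (auto simp: pbij_def inj_on_def dom_def)
  show ?thesis
  proof
    assume c: "conv f y = Some x"
    then have "y \<in> ran f" by (auto simp: conv_def split: if_splits)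
    then obtain x0 where x0: "f x0 = Some y" by (auto simp: ran_def)
    then have "(THE x. f x = Some y) = x0" using uniq by (intro the_equality) auto
    then show "f x = Some y" using c x0 \<open>y \<in> ran f\<close> by (simp add: conv_def)
  next
    assume "f x = Some y"
    moreover then have "(THE x. f x = Some y) = x" using uniq by (intro the_equality) auto
    ultimately show "conv f y = Some x" by (auto simp: conv_def ran_def)
  qed
qed

lemma conv_pbij:
  assumes fp: "f \<in> pbij X"
  shows "conv f \<in> pbij X" "dom (conv f) = ran f" "ran (conv f) = dom f" "conv (conv f) = f"
proof -
  show d: "dom (conv f) = ran f" using conv_iff[OF fp] by (auto simp: dom_def ran_def)
  show r: "ran (conv f) = dom f" using conv_iff[OF fp] by (auto simp: dom_def ran_def)
  have "inj_on (conv f) (dom (conv f))"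
  proof (rule inj_onI)
    fix a b assume "a \<in> dom (conv f)" "b \<in> dom (conv f)" "conv f a = conv f b"
    then obtain c where "conv f a = Some c" "conv f b = Some c" by auto
    then have "f c = Some a" "f c = Some b" using conv_iff[OF fp] by auto
    then show "a = b" by simp
  qed
  then show cp: "conv f \<in> pbij X" using fp d r by (auto simp: pbij_def)
  show "conv (conv f) = f"
  proof
    fix x show "conv (conv f) x = f x"
    proof (cases "f x")
      case None
      then have "conv (conv f) x \<noteq> Some y" for y using conv_iff[OF cp] conv_iff[OF fp] by simp
      then show ?thesis using None by (cases "conv (conv f) x") auto
    next
      case (Some y) then show ?thesis using conv_iff[OF cp] conv_iff[OF fp] by simp
    qed
  qed
qed

lemma conv_sat:
  assumes "f \<in> sat X V F1 F2" shows "conv f \<in> sat X (converse V) F2 F1"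
proof -
  have fp: "f \<in> pbij X" using assms by (simp add: sat_def)
  have a1: "\<forall>(x,y)\<in>V. f x = Some y" and a2: "\<forall>x\<in>F1. x \<notin> dom f" and a3: "\<forall>y\<in>F2. y \<notin> ran f"
    using assms by (simp_all add: sat_def)
  have b1: "\<forall>(y,x)\<in>converse V. conv f y = Some x" using a1 conv_iff[OF fp] by auto
  have b2: "\<forall>x\<in>F2. x \<notin> dom (conv f)" using a3 conv_pbij(2)[OF fp] by simp
  have b3: "\<forall>y\<in>F1. y \<notin> ran (conv f)" using a2 conv_pbij(3)[OF fp] by simp
  show ?thesis unfolding sat_def using conv_pbij(1)[OF fp] b1 b2 b3 by blast
qed

lemma key_ran:
  assumes f: "f \<in> sat X V F1 F2" and fin: "finite V" "finite F1" "finite F2"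
    and sub: "V \<subseteq> X \<times> X" "F1 \<subseteq> X" "F2 \<subseteq> X"
  shows "\<exists>N. openin (powset_topology X) N \<and> ran f \<in> N \<and> N \<subseteq> ran ` sat X V F1 F2"
proof -
  have fp: "f \<in> pbij X" using f by (simp add: sat_def)
  have sub': "converse V \<subseteq> X \<times> X" using sub(1) by blast
  have finV: "finite (converse V)" using fin(1) by simp
  obtain N where N: "openin (powset_topology X) N" "dom (conv f) \<in> N" "N \<subseteq> dom ` sat X (converse V) F2 F1"
    using key_dom[OF conv_sat[OF f] finV fin(3) fin(2) sub' sub(3) sub(2)] by blast
  have "dom ` sat X (converse V) F2 F1 \<subseteq> ran ` sat X V F1 F2"
  proof
    fix A assume "A \<in> dom ` sat X (converse V) F2 F1"
    then obtain g where g: "g \<in> sat X (converse V) F2 F1" "A = dom g" by blast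
    have gp: "g \<in> pbij X" using g by (simp add: sat_def)
    have "conv g \<in> sat X V F1 F2" using conv_sat[OF g(1)] by simp
    moreover have "ran (conv g) = A" using conv_pbij[OF gp] g by simp
    ultimately show "A \<in> ran ` sat X V F1 F2" by (metis image_eqI)
  qed
  then have "N \<subseteq> ran ` sat X V F1 F2" using N(3) by (rule subset_trans[rotated])
  moreover have "ran f \<in> N" using N(2) conv_pbij(2)[OF fp] by simp
  ultimately show ?thesis using N(1) by blast
qed

lemma part_ii:
  "open_map (tau_pp X) (powset_topology X) dom \<and> open_map (tau_pp X) (powset_topology X) ran"
  unfolding open_map_def
proof (intro conjI allI impI)
  fix U assume U: "openin (tau_pp X) U"
  have b: "basic X U" using basic_generated[OF U] .
  show "openin (powset_topology X) (dom ` U)"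
    unfolding openin_subopen[of _ "dom ` U"]
  proof
    fix A assume "A \<in> dom ` U"
    then obtain f where f: "f \<in> U" "A = dom f" by (rule imageE) simp
    obtain V F1 F2 where o: "okc X V F1 F2" and f1: "f \<in> sat X V F1 F2" and s1: "sat X V F1 F2 \<subseteq> U"
      using basicE[OF b f(1)] by blast
    obtain N where N: "openin (powset_topology X) N" "dom f \<in> N" "N \<subseteq> dom ` sat X V F1 F2"
    proof -
      have oo: "finite V" "finite F1" "finite F2" "V \<subseteq> X \<times> X" "F1 \<subseteq> X" "F2 \<subseteq> X"
        using o by (simp_all add: okc_def)
      show ?thesis using key_dom[OF f1 oo] that by blast
    qed
    have "N \<subseteq> dom ` U" using N(3) image_mono[OF s1] by (rule subset_trans)
    then show "\<exists>T. openin (powset_topology X) T \<and> A \<in> T \<and> T \<subseteq> dom ` U"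
      using N(1,2) f(2) by blast
  qed
  show "openin (powset_topology X) (ran ` U)"
    unfolding openin_subopen[of _ "ran ` U"]
  proof
    fix A assume "A \<in> ran ` U"
    then obtain f where f: "f \<in> U" "A = ran f" by (rule imageE) simp
    obtain V F1 F2 where o: "okc X V F1 F2" and f1: "f \<in> sat X V F1 F2" and s1: "sat X V F1 F2 \<subseteq> U"
      using basicE[OF b f(1)] by blast
    obtain N where N: "openin (powset_topology X) N" "ran f \<in> N" "N \<subseteq> ran ` sat X V F1 F2"
    proof -
      have oo: "finite V" "finite F1" "finite F2" "V \<subseteq> X \<times> X" "F1 \<subseteq> X" "F2 \<subseteq> X"
        using o by (simp_all add: okc_def)
      show ?thesis using key_ran[OF f1 oo] that by blast
    qed
    have "N \<subseteq> ran ` U" using N(3) image_mono[OF s1] by (rule subset_trans)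
    then show "\<exists>T. openin (powset_topology X) T \<and> A \<in> T \<and> T \<subseteq> ran ` U"
      using N(1,2) f(2) by blast
  qed
qed

theorem theorem3p8:
  fixes X :: "'a set"
  shows
   "(\<comment> \<open>(i)\<close>
      (continuous_map (tau_pp X) (powset_topology X) dom \<and>
       continuous_map (tau_pp X) (powset_topology X) ran \<and>
       (\<forall>x\<in>X. continuous_map (subtopology (tau_pp X) (Dset X x)) (discrete_topology X) (ev x))) \<and>
      (\<forall>T :: ('a \<rightharpoonup> 'a) topology.
         topspace T = pbij X \<and>
         continuous_map T (powset_topology X) dom \<and>
         continuous_map T (powset_topology X) ran \<and>
         (\<forall>x\<in>X. continuous_map (subtopology T (Dset X x)) (discrete_topology X) (ev x))
         \<longrightarrow> (\<forall>U. openin (tau_pp X) U \<longrightarrow> openin T U))) \<and>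
    \<comment> \<open>(ii)\<close>
    open_map (tau_pp X) (powset_topology X) dom \<and>
    open_map (tau_pp X) (powset_topology X) ran \<and>
    \<comment> \<open>(iii)\<close>
    (\<forall>(Y :: 'b topology) (\<phi> :: 'b \<Rightarrow> ('a \<rightharpoonup> 'a)).
       \<phi> ` topspace Y \<subseteq> pbij X \<longrightarrow>
       (continuous_map Y (tau_pp X) \<phi> \<longleftrightarrow>
          continuous_map Y (powset_topology X) (dom \<circ> \<phi>) \<and>
          continuous_map Y (powset_topology X) (ran \<circ> \<phi>) \<and>
          (\<forall>x\<in>X. continuous_map (subtopology Y {y \<in> topspace Y. \<phi> y \<in> Dset X x})
                     (discrete_topology X) (ev x \<circ> \<phi>)))) \<and>
    \<comment> \<open>(iv)\<close>
    compactin (tau_pp X) {idmap A | A. A \<subseteq> X}"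
proof -
  have a: "continuous_map (tau_pp X) (powset_topology X) dom \<and>
       continuous_map (tau_pp X) (powset_topology X) ran \<and>
       (\<forall>x\<in>X. continuous_map (subtopology (tau_pp X) (Dset X x)) (discrete_topology X) (ev x))"
    by (rule part_i_a)
  have b: "\<forall>T :: ('a \<rightharpoonup> 'a) topology.
         topspace T = pbij X \<and>
         continuous_map T (powset_topology X) dom \<and>
         continuous_map T (powset_topology X) ran \<and>
         (\<forall>x\<in>X. continuous_map (subtopology T (Dset X x)) (discrete_topology X) (ev x))
         \<longrightarrow> (\<forall>U. openin (tau_pp X) U \<longrightarrow> openin T U)"
  proof (intro allI impI)
    fix T :: "('a \<rightharpoonup> 'a) topology" and U
    assume h: "topspace T = pbij X \<and>
         continuous_map T (powset_topology X) dom \<and>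
         continuous_map T (powset_topology X) ran \<and>
         (\<forall>x\<in>X. continuous_map (subtopology T (Dset X x)) (discrete_topology X) (ev x))"
      and u: "openin (tau_pp X) U"
    have h1: "topspace T = pbij X" using h by (rule conjunct1)
    have h2: "continuous_map T (powset_topology X) dom" using h by blast
    have h3: "continuous_map T (powset_topology X) ran" using h by blast
    have h4: "\<forall>x\<in>X. continuous_map (subtopology T (Dset X x)) (discrete_topology X) (ev x)"
      using h by blast
    show "openin T U" by (rule part_i_b[OF h1 h2 h3 h4 u])
  qed
  have c: "\<forall>(Y :: 'b topology) (\<phi> :: 'b \<Rightarrow> ('a \<rightharpoonup> 'a)).
       \<phi> ` topspace Y \<subseteq> pbij X \<longrightarrow>
       (continuous_map Y (tau_pp X) \<phi> \<longleftrightarrow>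
          continuous_map Y (powset_topology X) (dom \<circ> \<phi>) \<and>
          continuous_map Y (powset_topology X) (ran \<circ> \<phi>) \<and>
          (\<forall>x\<in>X. continuous_map (subtopology Y {y \<in> topspace Y. \<phi> y \<in> Dset X x})
                     (discrete_topology X) (ev x \<circ> \<phi>)))"
  proof (intro allI impI)
    fix Y :: "'b topology" and \<phi> :: "'b \<Rightarrow> ('a \<rightharpoonup> 'a)"
    assume "\<phi> ` topspace Y \<subseteq> pbij X"
    then show "continuous_map Y (tau_pp X) \<phi> \<longleftrightarrow>
          continuous_map Y (powset_topology X) (dom \<circ> \<phi>) \<and>
          continuous_map Y (powset_topology X) (ran \<circ> \<phi>) \<and>
          (\<forall>x\<in>X. continuous_map (subtopology Y {y \<in> topspace Y. \<phi> y \<in> Dset X x})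
                     (discrete_topology X) (ev x \<circ> \<phi>))" by (rule part_iii)
  qed
  show ?thesis
    apply (rule conjI)
     apply (rule conjI[OF a b])
    apply (rule conjI[OF part_ii[THEN conjunct1]])
    apply (rule conjI[OF part_ii[THEN conjunct2]])
    apply (rule conjI[OF c part_iv])
    done
qed

end
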